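(* Let $B$ be a ring with identity, $\rho$ an automorphism of $B$ and $D$ a $\rho$-derivation of $B$ such that $\rho D = D\rho$. Let $f = X^m + X^{m-1}a_{m-1} + \cdots + Xa_1 + a_0 \in B[X;\rho,D]_{(0)}$ with all coefficients $a_0,\dots,a_{m-1}$ in $B^\rho$, and put $a_m=1$. Then all $a_i$ lie in $C(B^{\rho,D})$, the center of $B^{\rho,D}$ (i.e. $f \in C(B^{\rho,D})[X]$). Moreover, for every $\alpha\in B$ and every $0 \le i \le m$, \[ \alpha a_i = \sum_{j=i}^{m} (-1)^{j-i}\binom{j}{i}\, a_j\, \rho^{m-j} D^{j-i}(\alpha). \]
   Context: All rings have an identity. A $\rho$-derivation of $B$ is an additive map $D: B\to B$ with $D(\alpha\beta) = D(\alpha)\beta + \rho(\alpha)D(\beta)$ for all $\alpha,\beta\in B$. $B[X;\rho,D]$ is the skew polynomial ring over $B$ (coefficients on the right) with multiplication determined by $\alpha X = X\rho(\alpha) + D(\alpha)$ for $\alpha\in B$. $B[X;\rho,D]_{(0)}$ is the set of monic $f\in B[X;\rho,D]$ with $fB[X;\rho,D] = B[X;\rho,D]f$. $B^\rho = \{\alpha\in B : \rho(\alpha)=\alpha\}$, $B^D = \{\alpha\in B : D(\alpha)=0\}$, $B^{\rho,D} = B^\rho\cap B^D$. *)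

theory Defs
  imports "HOL-Computational_Algebra.Polynomial"
begin

text \<open>Skew polynomials f = sum X^i a_i (coefficients on the right) are represented by
  their coefficient sequences, stored in the type 'a poly (only used as a container of
  finitely supported coefficients; coeff f i is the coefficient of X^i).
  The skew multiplication is determined by  alpha X = X rho(alpha) + D(alpha).\<close>

text \<open>skew_coef rho D n k alpha is the coefficient of X^k in alpha X^n, i.e.
  alpha X^n = sum_k X^k (skew_coef rho D n k alpha).\<close>
fun skew_coef :: "('a::ring_1 \<Rightarrow> 'a) \<Rightarrow> ('a \<Rightarrow> 'a) \<Rightarrow> nat \<Rightarrow> nat \<Rightarrow> 'a \<Rightarrow> 'a" where
  "skew_coef \<rho> D 0 k \<alpha> = (if k = 0 then \<alpha> else 0)"
| "skew_coef \<rho> D (Suc n) k \<alpha> =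
     (if k = 0 then 0 else skew_coef \<rho> D n (k - 1) (\<rho> \<alpha>)) + skew_coef \<rho> D n k (D \<alpha>)"

definition skew_mult :: "('a::ring_1 \<Rightarrow> 'a) \<Rightarrow> ('a \<Rightarrow> 'a) \<Rightarrow> 'a poly \<Rightarrow> 'a poly \<Rightarrow> 'a poly" where
  "skew_mult \<rho> D p q =
     (\<Sum>i\<le>degree p. \<Sum>j\<le>degree q. \<Sum>k\<le>j.
        monom (skew_coef \<rho> D j k (coeff p i) * coeff q j) (i + k))"

definition skew_invariant_monic :: "('a::ring_1 \<Rightarrow> 'a) \<Rightarrow> ('a \<Rightarrow> 'a) \<Rightarrow> 'a poly set" where
  "skew_invariant_monic \<rho> D =
     {f. coeff f (degree f) = 1 \<and>
         range (\<lambda>g. skew_mult \<rho> D f g) = range (\<lambda>g. skew_mult \<rho> D g f)}"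

definition ring_automorphism :: "('a::ring_1 \<Rightarrow> 'a) \<Rightarrow> bool" where
  "ring_automorphism \<rho> \<longleftrightarrow> bij \<rho> \<and> \<rho> 1 = 1 \<and>
     (\<forall>x y. \<rho> (x + y) = \<rho> x + \<rho> y) \<and> (\<forall>x y. \<rho> (x * y) = \<rho> x * \<rho> y)"

definition rho_derivation :: "('a::ring_1 \<Rightarrow> 'a) \<Rightarrow> ('a \<Rightarrow> 'a) \<Rightarrow> bool" where
  "rho_derivation \<rho> D \<longleftrightarrow> (\<forall>x y. D (x + y) = D x + D y) \<and>
     (\<forall>x y. D (x * y) = D x * y + \<rho> x * D y)"

definition fixed_const :: "('a::ring_1 \<Rightarrow> 'a) \<Rightarrow> ('a \<Rightarrow> 'a) \<Rightarrow> 'a set" where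
  "fixed_const \<rho> D = {a. \<rho> a = a \<and> D a = 0}"

definition center_of :: "'a::ring_1 set \<Rightarrow> 'a set" where
  "center_of S = {a \<in> S. \<forall>b\<in>S. a * b = b * a}"

end

theory Submission
  imports Defs
begin

lemma funpow_comm:
  assumes "\<And>x. r (d x) = d (r x)"
  shows "(r ^^ k) ((d ^^ j) x) = (d ^^ j) ((r ^^ k) x)"
proof -
  have 1: "r ((d ^^ j) x) = (d ^^ j) (r x)" for x j
    by (induction j) (auto simp: assms)
  show ?thesis by (induction k) (auto simp: 1)
qed

lemma skew_coef_closed:
  assumes "\<And>x. \<rho> (D x) = D (\<rho> x)"
  shows "skew_coef \<rho> D n k \<alpha> = of_nat (n choose k) * (\<rho> ^^ k) ((D ^^ (n - k)) \<alpha>)"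
proof (induction n arbitrary: k \<alpha>)
  case 0
  then show ?case by (cases k) auto
next
  case (Suc n)
  show ?case
  proof (cases k)
    case 0
    then show ?thesis using Suc by (simp add: funpow_swap1)
  next
    case (Suc k')
    have e: "(\<rho> ^^ k') (\<rho> \<alpha>) = (\<rho> ^^ k) \<alpha>" using Suc by (simp add: funpow_swap1)
    have "(\<rho> ^^ k') ((D ^^ (n - k')) (\<rho> \<alpha>)) = (D ^^ (n - k')) ((\<rho> ^^ k') (\<rho> \<alpha>))"
      by (rule funpow_comm[of \<rho> D, OF assms])
    also have "\<dots> = (D ^^ (n - k')) ((\<rho> ^^ k) \<alpha>)" by (simp only: e)
    also have "\<dots> = (\<rho> ^^ k) ((D ^^ (n - k')) \<alpha>)"
      by (rule funpow_comm[of \<rho> D, OF assms, symmetric])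
    finally have a: "(\<rho> ^^ k') ((D ^^ (n - k')) (\<rho> \<alpha>)) = (\<rho> ^^ k) ((D ^^ (Suc n - k)) \<alpha>)"
      using Suc by simp
    have b: "of_nat (n choose k) * (\<rho> ^^ k) ((D ^^ (n - k)) (D \<alpha>)) =
          of_nat (n choose k) * (\<rho> ^^ k) ((D ^^ (Suc n - k)) \<alpha>)"
    proof (cases "k \<le> n")
      case True
      then have "Suc n - k = Suc (n - k)" by simp
      then show ?thesis by (simp add: funpow_swap1)
    qed (simp add: binomial_eq_0)
    show ?thesis using Suc.IH[of k' "\<rho> \<alpha>"] Suc.IH[of k "D \<alpha>"] a b Suc
      by (simp add: distrib_right)
  qed
qed

lemma sum_single:
  assumes "finite S" "c \<in> S" "\<And>i. i \<in> S \<Longrightarrow> i \<noteq> c \<Longrightarrow> h i = 0"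
  shows "sum h S = h c"
proof -
  have "sum h S = sum h {c}"
    by (rule sum.mono_neutral_right) (use assms in auto)
  then show ?thesis by simp
qed

lemma sum_two:
  fixes h :: "nat \<Rightarrow> 'a::comm_monoid_add"
  assumes "\<And>i. 2 \<le> i \<Longrightarrow> h i = 0"
  shows "(\<Sum>i\<le>n. h i) = h 0 + (if 0 < n then h 1 else 0)"
proof (induction n)
  case (Suc n)
  then show ?case using assms[of "Suc n"] by (cases n) auto
qed simp


lemma skew_coef_zero:
  assumes "\<rho> 0 = 0" "D 0 = 0"
  shows "skew_coef \<rho> D n k 0 = 0"
  by (induction n arbitrary: k) (auto simp: assms)

lemma skew_coef_gt:
  "n < k \<Longrightarrow> skew_coef \<rho> D n k \<alpha> = 0"
  by (induction n arbitrary: k \<alpha>) auto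

lemma coeff_skew_mult:
  assumes "\<rho> 0 = 0" "D 0 = 0" "degree q \<le> M"
  shows "coeff (skew_mult \<rho> D p q) n =
     (\<Sum>i\<le>n. \<Sum>j\<le>M. skew_coef \<rho> D j (n-i) (coeff p i) * coeff q j)"
proof -
  define F where "F i j = (if i \<le> n then skew_coef \<rho> D j (n-i) (coeff p i) * coeff q j else 0)" for i j
  have inner: "(\<Sum>k\<le>j. (if i + k = n then skew_coef \<rho> D j k (coeff p i) * coeff q j else 0)) = F i j" for i j
  proof (cases "i \<le> n \<and> n - i \<le> j")
    case True
    then have "(\<Sum>k\<le>j. (if i + k = n then skew_coef \<rho> D j k (coeff p i) * coeff q j else 0))
       = (\<Sum>k\<le>j. (if k = n - i then skew_coef \<rho> D j k (coeff p i) * coeff q j else 0))"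
      by (intro sum.cong) auto
    also have "\<dots> = F i j" using True by (simp add: F_def)
    finally show ?thesis .
  next
    case False
    then have "(\<Sum>k\<le>j. (if i + k = n then skew_coef \<rho> D j k (coeff p i) * coeff q j else 0)) = 0"
      by (intro sum.neutral) auto
    moreover have "F i j = 0" using False by (auto simp: F_def skew_coef_gt)
    ultimately show ?thesis by simp
  qed
  have "coeff (skew_mult \<rho> D p q) n = (\<Sum>i\<le>degree p. \<Sum>j\<le>degree q. F i j)"
    unfolding skew_mult_def by (simp add: coeff_sum coeff_monom inner)
  also have "\<dots> = (\<Sum>i\<le>degree p. \<Sum>j\<le>M. F i j)"
    by (intro sum.cong refl sum.mono_neutral_left) (auto simp: F_def coeff_eq_0 assms)
  also have "\<dots> = (\<Sum>i\<le>degree p + n. \<Sum>j\<le>M. F i j)"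
  proof (intro sum.mono_neutral_left)
    show "\<forall>i\<in>{..degree p + n} - {..degree p}. (\<Sum>j\<le>M. F i j) = 0"
    proof
      fix i assume "i \<in> {..degree p + n} - {..degree p}"
      then have "coeff p i = 0" by (auto simp: coeff_eq_0)
      then show "(\<Sum>j\<le>M. F i j) = 0" unfolding F_def by (simp only: skew_coef_zero[of \<rho> D, OF assms(1,2)] mult_zero_left if_cancel sum.neutral_const)
    qed
  qed auto
  also have "\<dots> = (\<Sum>i\<le>n. \<Sum>j\<le>M. F i j)"
    by (intro sum.mono_neutral_right) (auto simp: F_def)
  also have "\<dots> = (\<Sum>i\<le>n. \<Sum>j\<le>M. skew_coef \<rho> D j (n-i) (coeff p i) * coeff q j)"
    by (simp add: F_def)
  finally show ?thesis .
qed



lemma alt_binom: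
  assumes "i \<le> m" "l \<le> m"
  shows "(\<Sum>j=i..m. (-1)^(j-i) * int (j choose i) * int (l choose j)) = (if l = i then 1 else 0)"
proof (cases "l < i")
  case True
  then show ?thesis by (intro trans[OF sum.neutral]) auto
next
  case False
  then have li: "i \<le> l" by simp
  have pw: "(-1)^(j-i) * int (j choose i) * int (l choose j) =
        int (l choose i) * ((-1)^(j-i) * int ((l-i) choose (j-i)))" if "j \<in> {i..m}" for j
  proof (cases "j \<le> l")
    case True
    have "(l choose j) * (j choose i) = (l choose i) * ((l - i) choose (j - i))"
      using choose_mult[of i j l] that True by simp
    then have "int (l choose j) * int (j choose i) = int (l choose i) * int ((l - i) choose (j - i))"
      by (metis of_nat_mult)
    then show ?thesis by (simp add: algebra_simps)
  next
    case False
    then have "l choose j = 0" "(l - i) choose (j - i) = 0" using li by auto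
    then show ?thesis by (simp only: of_nat_0 mult_0_right)
  qed
  have "(\<Sum>j=i..m. (-1)^(j-i) * int (j choose i) * int (l choose j)) =
      int (l choose i) * (\<Sum>j=i..m. (-1)^(j-i) * int ((l-i) choose (j-i)))"
    by (simp add: pw sum_distrib_left)
  also have "(\<Sum>j=i..m. (-1)^(j-i) * int ((l-i) choose (j-i))) =
      (\<Sum>t=0..m-i. (-1)^t * int ((l-i) choose t))"
    using sum.shift_bounds_cl_nat_ivl[of "\<lambda>j. (-1)^(j-i) * int ((l-i) choose (j-i))" 0 i "m-i"]
      assms by simp
  also have "\<dots> = (\<Sum>t\<le>l-i. (-1)^t * int ((l-i) choose t))"
    unfolding atLeast0AtMost
    by (rule sum.mono_neutral_right) (use assms in auto)
  also have "\<dots> = (if l = i then 1 else 0)"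
  proof (cases "l = i")
    case True then show ?thesis by simp
  next
    case False
    then show ?thesis using choose_alternating_sum[of "l-i"] li by simp
  qed
  finally show ?thesis using li by auto
qed


theorem corollary1p7:
  fixes \<rho> D :: "'a::ring_1 \<Rightarrow> 'a" and f :: "'a poly"
  assumes "ring_automorphism \<rho>"
    and "rho_derivation \<rho> D"
    and "\<rho> \<circ> D = D \<circ> \<rho>"
    and "f \<in> skew_invariant_monic \<rho> D"
    and "\<forall>i < degree f. \<rho> (coeff f i) = coeff f i"
  shows "(\<forall>i \<le> degree f. coeff f i \<in> center_of (fixed_const \<rho> D)) \<and>
         (\<forall>\<alpha> i. i \<le> degree f \<longrightarrow>
            \<alpha> * coeff f i =
              (\<Sum>j = i..degree f. (-1) ^ (j - i) * of_nat (j choose i) * coeff f j *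
                 (\<rho> ^^ (degree f - j)) ((D ^^ (j - i)) \<alpha>)))"
proof -
  have bij: "bij \<rho>" and r1: "\<rho> 1 = 1" and radd: "\<And>x y. \<rho> (x + y) = \<rho> x + \<rho> y"
    using assms(1) unfolding ring_automorphism_def by auto
  have Dadd: "\<And>x y. D (x + y) = D x + D y" and Dmul: "\<And>x y. D (x * y) = D x * y + \<rho> x * D y"
    using assms(2) unfolding rho_derivation_def by auto
  have comm: "\<And>x. \<rho> (D x) = D (\<rho> x)" using assms(3) by (metis comp_apply)
  have r0: "\<rho> 0 = 0" using radd[of 0 0] by simp
  have D0: "D 0 = 0" using Dadd[of 0 0] by simp
  have D1: "D 1 = 0" using Dmul[of 1 1] r1 by simp
  have inj: "inj \<rho>" using bij bij_is_inj by auto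
  have rpow1: "(\<rho> ^^ k) 1 = 1" for k by (induction k) (auto simp: r1)
  have rpow0: "(\<rho> ^^ k) 0 = 0" for k by (induction k) (auto simp: r0)
  have Dpow0: "(D ^^ k) 0 = 0" for k by (induction k) (auto simp: D0)
  have rpow_nz: "(\<rho> ^^ k) x \<noteq> 0" if "x \<noteq> 0" for k x
    using that
  proof (induction k)
    case (Suc k)
    then show ?case using inj r0 by (metis funpow.simps(2) comp_apply injD)
  qed simp
  note closed = skew_coef_closed[of \<rho> D, OF comm]
  have scdiag: "skew_coef \<rho> D n n x = (\<rho> ^^ n) x" for n x by (simp add: closed)
  note csm = coeff_skew_mult[of \<rho> D, OF r0 D0]
  note gt = skew_coef_gt
  note scz = skew_coef_zero[of \<rho> D, OF r0 D0]
  have inv: "range (\<lambda>g. skew_mult \<rho> D f g) = range (\<lambda>g. skew_mult \<rho> D g f)"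
    and am: "coeff f (degree f) = 1"
    using assms(4) unfolding skew_invariant_monic_def by auto
  have fnz: "f \<noteq> 0" using am by auto
  have aeq0: "coeff f n = 0" if "degree f < n" for n using that coeff_eq_0 by auto

  \<comment> \<open>Step A: alpha f = f rho^m(alpha)\<close>
  have A: "(\<Sum>j\<le>degree f. skew_coef \<rho> D j n \<alpha> * coeff f j) = coeff f n * (\<rho> ^^ degree f) \<alpha>"
    for \<alpha> n
  proof -
    have "skew_mult \<rho> D [:\<alpha>:] f \<in> range (\<lambda>g. skew_mult \<rho> D f g)" using inv by auto
    then obtain g where g: "skew_mult \<rho> D [:\<alpha>:] f = skew_mult \<rho> D f g" by auto
    have L: "coeff (skew_mult \<rho> D [:\<alpha>:] f) k = (\<Sum>j\<le>degree f. skew_coef \<rho> D j k \<alpha> * coeff f j)" for k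
    proof -
      have "coeff (skew_mult \<rho> D [:\<alpha>:] f) k =
         (\<Sum>i\<le>k. \<Sum>j\<le>degree f. skew_coef \<rho> D j (k-i) (coeff [:\<alpha>:] i) * coeff f j)"
        by (rule csm) simp
      also have "\<dots> = (\<Sum>j\<le>degree f. skew_coef \<rho> D j (k-0) (coeff [:\<alpha>:] 0) * coeff f j)"
      proof (rule sum_single)
        fix i assume "i \<in> {..k}" "i \<noteq> 0"
        then obtain i' where "i = Suc i'" by (cases i) auto
        then show "(\<Sum>j\<le>degree f. skew_coef \<rho> D j (k-i) (coeff [:\<alpha>:] i) * coeff f j) = 0"
          by (simp add: scz)
      qed auto
      finally show ?thesis by simp
    qed
    have dg: "degree g = 0"
    proof (rule ccontr)
      assume dn: "degree g \<noteq> 0"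
      define d where "d = degree g"
      have "coeff (skew_mult \<rho> D f g) (degree f + d) =
         (\<Sum>i\<le>degree f + d. \<Sum>j\<le>d. skew_coef \<rho> D j (degree f + d - i) (coeff f i) * coeff g j)"
        by (rule csm) (simp add: d_def)
      also have "\<dots> = (\<Sum>j\<le>d. skew_coef \<rho> D j (degree f + d - degree f) (coeff f (degree f)) * coeff g j)"
      proof (rule sum_single)
        fix i assume i: "i \<in> {..degree f + d}" "i \<noteq> degree f"
        show "(\<Sum>j\<le>d. skew_coef \<rho> D j (degree f + d - i) (coeff f i) * coeff g j) = 0"
        proof (cases "i < degree f")
          case True
          then show ?thesis by (intro sum.neutral) (auto simp: gt)
        next
          case False
          then have "coeff f i = 0" using i aeq0 by auto
          then show ?thesis by (simp add: scz)
        qed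
      qed auto
      also have "\<dots> = skew_coef \<rho> D d d 1 * coeff g d"
        by (rule trans[OF sum_single[of _ d]]) (auto simp: am gt)
      also have "\<dots> = coeff g d" by (simp add: scdiag rpow1)
      finally have c1: "coeff (skew_mult \<rho> D f g) (degree f + d) = coeff g d" .
      have "coeff (skew_mult \<rho> D [:\<alpha>:] f) (degree f + d) = 0"
        unfolding L by (intro sum.neutral) (use dn d_def in \<open>auto simp: gt\<close>)
      moreover have "coeff g d \<noteq> 0" using dn d_def leading_coeff_neq_0 by force
      ultimately show False using g c1 by simp
    qed
    have R: "coeff (skew_mult \<rho> D f g) k = coeff f k * coeff g 0" for k
    proof -
      have "coeff (skew_mult \<rho> D f g) k =
         (\<Sum>i\<le>k. \<Sum>j\<le>0. skew_coef \<rho> D j (k-i) (coeff f i) * coeff g j)"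
        by (rule csm) (simp add: dg)
      also have "\<dots> = (\<Sum>j\<le>0. skew_coef \<rho> D j (k-k) (coeff f k) * coeff g j)"
        by (rule sum_single) auto
      finally show ?thesis by simp
    qed
    have "coeff g 0 = (\<rho> ^^ degree f) \<alpha>"
    proof -
      have "coeff g 0 = coeff f (degree f) * coeff g 0" using am by simp
      also have "\<dots> = (\<Sum>j\<le>degree f. skew_coef \<rho> D j (degree f) \<alpha> * coeff f j)"
        using g L R by metis
      also have "\<dots> = skew_coef \<rho> D (degree f) (degree f) \<alpha> * coeff f (degree f)"
        by (rule sum_single) (auto simp: gt)
      finally show ?thesis by (simp add: am scdiag)
    qed
    then show ?thesis using g L R by metis
  qed

  have GF: "coeff (skew_mult \<rho> D g f) n = (\<Sum>i\<le>n. coeff f (n-i) * (\<rho> ^^ degree f) (coeff g i))"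
    for g n
    by (subst csm[of f "degree f"]) (simp_all add: A)

  define X :: "'a poly" where "X = monom 1 1"
  have FX: "coeff (skew_mult \<rho> D f X) n = D (coeff f n) + (if 0 < n then \<rho> (coeff f (n-1)) else 0)" for n
  proof -
    have "coeff (skew_mult \<rho> D f X) n =
         (\<Sum>i\<le>n. \<Sum>j\<le>1. skew_coef \<rho> D j (n-i) (coeff f i) * coeff X j)"
      by (rule csm) (simp add: X_def degree_monom_eq)
    also have "\<dots> = (\<Sum>i\<le>n. (if i = n then D (coeff f i) else 0) + (if i = n - 1 \<and> 0 < n then \<rho> (coeff f i) else 0))"
      by (intro sum.cong refl) (auto simp: X_def numeral_2_eq_2)
    also have "\<dots> = D (coeff f n) + (if 0 < n then \<rho> (coeff f (n-1)) else 0)"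
      by (cases n) (simp_all add: sum.distrib)
    finally show ?thesis .
  qed
  have "skew_mult \<rho> D f X \<in> range (\<lambda>g. skew_mult \<rho> D g f)" using inv by blast
  then obtain g where g: "skew_mult \<rho> D f X = skew_mult \<rho> D g f" by auto
  have FXm1: "coeff (skew_mult \<rho> D f X) (Suc (degree f)) = 1"
    by (simp add: FX aeq0 D0 am r1)
  have gnz: "g \<noteq> 0"
  proof
    assume "g = 0"
    then have "coeff (skew_mult \<rho> D g f) (Suc (degree f)) = 0" by (simp add: GF rpow0)
    then show False using FXm1 g by simp
  qed
  have dg: "degree g \<le> 1"
  proof (rule ccontr)
    assume "\<not> degree g \<le> 1"
    then have d2: "2 \<le> degree g" by simp
    have "coeff (skew_mult \<rho> D g f) (degree f + degree g) =
        coeff f (degree f + degree g - degree g) * (\<rho> ^^ degree f) (coeff g (degree g))"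
      unfolding GF
    proof (rule sum_single)
      fix i assume i: "i \<in> {..degree f + degree g}" "i \<noteq> degree g"
      show "coeff f (degree f + degree g - i) * (\<rho> ^^ degree f) (coeff g i) = 0"
      proof (cases "i < degree g")
        case True then show ?thesis by (simp add: aeq0)
      next
        case False then show ?thesis using i by (simp add: coeff_eq_0 rpow0)
      qed
    qed auto
    also have "\<dots> \<noteq> 0" using am rpow_nz leading_coeff_neq_0[OF gnz] by simp
    finally have "coeff (skew_mult \<rho> D g f) (degree f + degree g) \<noteq> 0" .
    moreover have "coeff (skew_mult \<rho> D f X) (degree f + degree g) = 0"
      using d2 by (simp add: FX aeq0 D0 r0)
    ultimately show False using g by simp
  qed
  have GF2: "coeff (skew_mult \<rho> D g f) n = coeff f n * (\<rho> ^^ degree f) (coeff g 0) +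
      (if 0 < n then coeff f (n - 1) * (\<rho> ^^ degree f) (coeff g 1) else 0)" for n
  proof -
    have "(\<Sum>i\<le>n. coeff f (n-i) * (\<rho> ^^ degree f) (coeff g i)) =
       coeff f (n-0) * (\<rho> ^^ degree f) (coeff g 0) + (if 0 < n then coeff f (n-1) * (\<rho> ^^ degree f) (coeff g 1) else 0)"
      by (rule sum_two) (use dg in \<open>simp add: coeff_eq_0 rpow0\<close>)
    then show ?thesis by (simp add: GF)
  qed
  have g1: "(\<rho> ^^ degree f) (coeff g 1) = 1"
    using FXm1 g GF2[of "Suc (degree f)"] by (simp add: aeq0 am)
  have g0: "(\<rho> ^^ degree f) (coeff g 0) = 0"
  proof -
    have "coeff (skew_mult \<rho> D f X) (degree f) = (if 0 < degree f then coeff f (degree f - 1) else 0)"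
      using assms(5) by (simp add: FX am D1)
    moreover have "(\<rho> ^^ degree f) (coeff g (Suc 0)) = 1" using g1 by simp
    ultimately show ?thesis using g GF2[of "degree f"] am by (cases "0 < degree f") auto
  qed
  have B: "D (coeff f n) = 0" for n
  proof (cases "n \<le> degree f")
    case True
    have "coeff (skew_mult \<rho> D f X) n = D (coeff f n) + (if 0 < n then coeff f (n-1) else 0)"
      using assms(5) True by (simp add: FX)
    moreover have "coeff (skew_mult \<rho> D g f) n = (if 0 < n then coeff f (n-1) else 0)"
      using GF2[of n] g0 g1 by simp
    ultimately show ?thesis using g by simp
  next
    case False then show ?thesis by (simp add: aeq0 D0)
  qed

  define \<sigma> where "\<sigma> = inv \<rho>"
  have rs: "\<rho> (\<sigma> x) = x" for x using bij unfolding \<sigma>_def by (simp add: bij_is_surj surj_f_inv_f)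
  have \<sigma>D: "\<sigma> (D x) = D (\<sigma> x)" for x
  proof -
    have "\<rho> (\<sigma> (D x)) = \<rho> (D (\<sigma> x))" using rs comm by metis
    then show ?thesis using inj injD by metis
  qed
  have rsk: "(\<rho> ^^ k) ((\<sigma> ^^ k) x) = x" for k x
  proof (induction k arbitrary: x)
    case (Suc k)
    have "(\<rho> ^^ Suc k) ((\<sigma> ^^ Suc k) x) = (\<rho> ^^ k) (\<rho> ((\<sigma> ^^ Suc k) x))"
      by (simp only: funpow_Suc_right comp_apply)
    also have "\<dots> = (\<rho> ^^ k) ((\<sigma> ^^ k) x)" by (simp add: rs)
    finally show ?case using Suc by simp
  qed simp
  have T: "\<alpha> * coeff f i =
              (\<Sum>j = i..degree f. (-1) ^ (j - i) * of_nat (j choose i) * coeff f j *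
                 (\<rho> ^^ (degree f - j)) ((D ^^ (j - i)) \<alpha>))" if im: "i \<le> degree f" for \<alpha> i
  proof -
    define E where "E l = (D ^^ (l - i)) \<alpha> * coeff f l" for l
    have key1: "coeff f j * (\<rho> ^^ (degree f - j)) ((D ^^ (j - i)) \<alpha>) =
        (\<Sum>l\<le>degree f. of_nat (l choose j) * E l)" if j: "i \<le> j" "j \<le> degree f" for j
    proof -
      define y where "y = (\<sigma> ^^ j) ((D ^^ (j - i)) \<alpha>)"
      have "(\<rho> ^^ degree f) y = (\<rho> ^^ (degree f - j)) ((\<rho> ^^ j) y)"
        using j funpow_add[of "degree f - j" j \<rho>] by simp
      then have "(\<rho> ^^ degree f) y = (\<rho> ^^ (degree f - j)) ((D ^^ (j - i)) \<alpha>)"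
        by (simp add: y_def rsk)
      then have "coeff f j * (\<rho> ^^ (degree f - j)) ((D ^^ (j - i)) \<alpha>) =
          (\<Sum>l\<le>degree f. skew_coef \<rho> D l j y * coeff f l)"
        using A[of j y] by simp
      also have "\<dots> = (\<Sum>l\<le>degree f. of_nat (l choose j) * E l)"
      proof (intro sum.cong refl)
        fix l
        show "skew_coef \<rho> D l j y * coeff f l = of_nat (l choose j) * E l"
        proof (cases "j \<le> l")
          case True
          have "(\<rho> ^^ j) ((D ^^ (l - j)) y) = (\<rho> ^^ j) ((\<sigma> ^^ j) ((D ^^ (l - j)) ((D ^^ (j - i)) \<alpha>)))"
            unfolding y_def using funpow_comm[of \<sigma> D, OF \<sigma>D] by metis
          also have "\<dots> = (D ^^ (l - j)) ((D ^^ (j - i)) \<alpha>)" by (simp add: rsk)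
          also have "\<dots> = (D ^^ (l - i)) \<alpha>"
            using True j funpow_add[of "l - j" "j - i" D] by simp
          finally show ?thesis by (simp add: closed E_def mult.assoc)
        next
          case False then show ?thesis by (simp add: closed binomial_eq_0)
        qed
      qed
      finally show ?thesis .
    qed
    have "(\<Sum>j = i..degree f. (-1) ^ (j - i) * of_nat (j choose i) * coeff f j *
                 (\<rho> ^^ (degree f - j)) ((D ^^ (j - i)) \<alpha>)) =
       (\<Sum>j = i..degree f. (-1) ^ (j - i) * of_nat (j choose i) * (\<Sum>l\<le>degree f. of_nat (l choose j) * E l))"
      by (intro sum.cong refl) (simp add: mult.assoc key1)
    also have "\<dots> = (\<Sum>j = i..degree f. \<Sum>l\<le>degree f.
        of_int ((-1) ^ (j - i) * int (j choose i) * int (l choose j)) * E l)"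
      by (simp add: sum_distrib_left mult.assoc)
    also have "\<dots> = (\<Sum>l\<le>degree f. \<Sum>j = i..degree f.
        of_int ((-1) ^ (j - i) * int (j choose i) * int (l choose j)) * E l)"
      by (rule sum.swap)
    also have "\<dots> = (\<Sum>l\<le>degree f.
        of_int (\<Sum>j = i..degree f. (-1) ^ (j - i) * int (j choose i) * int (l choose j)) * E l)"
      by (simp add: sum_distrib_right of_int_sum)
    also have "\<dots> = (\<Sum>l\<le>degree f. of_int (if l = i then 1 else 0) * E l)"
      by (intro sum.cong refl) (simp add: alt_binom im)
    also have "\<dots> = E i"
      by (rule trans[OF sum_single[of _ i]]) (use im in auto)
    also have "\<dots> = \<alpha> * coeff f i" by (simp add: E_def)
    finally show ?thesis by simp
  qed

  have C: "coeff f i \<in> center_of (fixed_const \<rho> D)" if im: "i \<le> degree f" for i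
  proof -
    have ri: "\<rho> (coeff f i) = coeff f i"
      using assms(5) im am r1 by (cases "i = degree f") auto
    have "a * coeff f i = coeff f i * a" if a: "a \<in> fixed_const \<rho> D" for a
    proof -
      have ra: "\<rho> a = a" and Da: "D a = 0" using a by (auto simp: fixed_const_def)
      have rpa: "(\<rho> ^^ k) a = a" for k by (induction k) (simp_all add: ra)
      have Dpa: "(D ^^ k) a = 0" if "0 < k" for k
        using that
      proof (induction k)
        case (Suc k) then show ?case by (simp only: funpow_Suc_right comp_apply Da Dpow0)
      qed simp
      have "a * coeff f i = (\<Sum>j = i..degree f. (-1) ^ (j - i) * of_nat (j choose i) * coeff f j *
                 (\<rho> ^^ (degree f - j)) ((D ^^ (j - i)) a))" by (rule T[OF im])
      also have "\<dots> = (-1) ^ (i - i) * of_nat (i choose i) * coeff f i *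
                 (\<rho> ^^ (degree f - i)) ((D ^^ (i - i)) a)"
        by (rule sum_single) (use im in \<open>auto simp: Dpa rpow0\<close>)
      also have "\<dots> = coeff f i * a" by (simp add: rpa)
      finally show ?thesis .
    qed
    then show ?thesis using ri B[of i] by (auto simp: center_of_def fixed_const_def)
  qed
  show ?thesis using C T by blast
qed

end
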